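(* Let $K>0$, $K\neq 1$, and let \[ A_4=\begin{pmatrix} 1 & K & K\\ K & 1 & 1\\ K & 1 & 1\end{pmatrix}. \] Then \[ S(A_4)=\begin{pmatrix} a & b & b\\ b & c & c\\ b & c & c\end{pmatrix} \] with \[ a=\frac{-K^2-2+K\sqrt{K^2+8}}{2(K^2-1)},\qquad b=\frac{3K^2-K\sqrt{K^2+8}}{4(K^2-1)},\qquad c=\frac{K^2-4+K\sqrt{K^2+8}}{8(K^2-1)}, \] and \[ \lim_{K\to\infty}S(A_4)=\begin{pmatrix} 0 & 1/2 & 1/2\\ 1/2 & 1/4 & 1/4\\ 1/2 & 1/4 & 1/4\end{pmatrix}. \]
   Context: For a positive $n\times n$ matrix $A$, the Sinkhorn limit $S(A)$ is the unique doubly stochastic matrix of the form $XAY$ with $X,Y$ positive diagonal matrices; it is the limit of alternately row scaling (dividing each row by its row sum) and column scaling (dividing each column by its column sum) starting from $A$. For a positive symmetric matrix $A$ there is a unique positive diagonal $X$ with $S(A)=XAX$. *)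

theory Defs
  imports "HOL-Analysis.Analysis"
begin

definition doubly_stochastic :: "real^'n^'n \<Rightarrow> bool" where
  "doubly_stochastic M \<longleftrightarrow> (\<forall>i j. M $ i $ j \<ge> 0) \<and>
     (\<forall>i. (\<Sum>j\<in>UNIV. M $ i $ j) = 1) \<and> (\<forall>j. (\<Sum>i\<in>UNIV. M $ i $ j) = 1)"

definition positive_matrix :: "real^'n^'n \<Rightarrow> bool" where
  "positive_matrix A \<longleftrightarrow> (\<forall>i j. A $ i $ j > 0)"

definition pos_diag :: "real^'n^'n \<Rightarrow> bool" where
  "pos_diag X \<longleftrightarrow> (\<forall>i j. i \<noteq> j \<longrightarrow> X $ i $ j = 0) \<and> (\<forall>i. X $ i $ i > 0)"

text \<open>Sinkhorn limit: the unique doubly stochastic matrix of the form X A Y with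
  X, Y positive diagonal matrices.\<close>
definition sinkhorn :: "real^'n^'n \<Rightarrow> real^'n^'n" where
  "sinkhorn A = (THE D. doubly_stochastic D \<and>
      (\<exists>X Y. pos_diag X \<and> pos_diag Y \<and> D = X ** A ** Y))"

definition A4 :: "real \<Rightarrow> real^3^3" where
  "A4 K = vector [vector [1, K, K], vector [K, 1, 1], vector [K, 1, 1]]"

end

theory Submission
  imports Defs "HOL-Real_Asymp.Real_Asymp"
begin

lemma diag_entry:
  fixes X A Y :: "real^'n^'n"
  assumes "pos_diag X" "pos_diag Y"
  shows "(X ** A ** Y) $ i $ j = X$i$i * A$i$j * Y$j$j"
proof -
  have 1: "(X ** A) $ i $ k = X$i$i * A$i$k" for k
  proof -
    have "(X ** A) $ i $ k = (\<Sum>l\<in>UNIV. X$i$l * A$l$k)"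
      by (simp add: matrix_matrix_mult_def)
    also have "\<dots> = (\<Sum>l\<in>UNIV. if l = i then X$i$i * A$i$k else 0)"
      by (rule sum.cong) (use assms(1) in \<open>auto simp: pos_diag_def\<close>)
    finally show ?thesis by simp
  qed
  have "(X ** A ** Y) $ i $ j = (\<Sum>l\<in>UNIV. (X ** A)$i$l * Y$l$j)"
    by (simp add: matrix_matrix_mult_def)
  also have "\<dots> = (\<Sum>l\<in>UNIV. if l = j then X$i$i * A$i$j * Y$j$j else 0)"
    by (rule sum.cong) (use assms(2) in \<open>auto simp: pos_diag_def 1\<close>)
  finally show ?thesis by simp
qed

lemma key:
  fixes D :: "real^'n^'n" and u v :: "'n \<Rightarrow> real"
  assumes pos: "\<forall>i j. D$i$j > 0" and rows: "\<forall>i. (\<Sum>j\<in>UNIV. D$i$j) = 1"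
    and cols: "\<forall>j. (\<Sum>i\<in>UNIV. D$i$j) = 1"
    and up: "\<forall>i. u i > 0" and vp: "\<forall>j. v j > 0"
    and r2: "\<forall>i. (\<Sum>j\<in>UNIV. u i * D$i$j * v j) = 1"
    and c2: "\<forall>j. (\<Sum>i\<in>UNIV. u i * D$i$j * v j) = 1"
  shows "u i * v j = 1"
proof -
  define m where "m = Min (range u)"
  define M where "M = Max (range v)"
  have "m \<in> range u" unfolding m_def by (rule Min_in) auto
  then obtain i0 where i0: "u i0 = m" by auto
  have "M \<in> range v" unfolding M_def by (rule Max_in) auto
  then obtain j0 where j0: "v j0 = M" by auto
  have um: "m \<le> u i" for i unfolding m_def by (rule Min_le) auto
  have vM: "v j \<le> M" for j unfolding M_def by (rule Max_ge) auto
  have mpos: "m > 0" using up i0 by metis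
  have Mpos: "M > 0" using vp j0 by metis
  have s1: "(\<Sum>j\<in>UNIV. D$i0$j * v j) \<le> M"
  proof -
    have "(\<Sum>j\<in>UNIV. D$i0$j * v j) \<le> (\<Sum>j\<in>UNIV. D$i0$j * M)"
      by (rule sum_mono) (use pos vM in \<open>auto intro: mult_left_mono less_imp_le\<close>)
    also have "\<dots> = M" using rows by (simp add: sum_distrib_right[symmetric])
    finally show ?thesis .
  qed
  have e1: "m * (\<Sum>j\<in>UNIV. D$i0$j * v j) = 1"
    using r2[rule_format, of i0] i0 by (simp add: sum_distrib_left mult.assoc)
  have s2: "(\<Sum>i\<in>UNIV. D$i$j0 * u i) \<ge> m"
  proof -
    have "(\<Sum>i\<in>UNIV. D$i$j0 * u i) \<ge> (\<Sum>i\<in>UNIV. D$i$j0 * m)"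
      by (rule sum_mono) (use pos um in \<open>auto intro: mult_left_mono less_imp_le\<close>)
    moreover have "(\<Sum>i\<in>UNIV. D$i$j0 * m) = m" using cols by (simp add: sum_distrib_right[symmetric])
    ultimately show ?thesis by simp
  qed
  have e2: "M * (\<Sum>i\<in>UNIV. D$i$j0 * u i) = 1"
    using c2[rule_format, of j0] j0 by (simp add: sum_distrib_left algebra_simps)
  have "m * (\<Sum>j\<in>UNIV. D$i0$j * v j) \<le> m * M" using s1 mpos by (intro mult_left_mono) auto
  hence "m * M \<ge> 1" using e1 by simp
  moreover have "M * m \<le> M * (\<Sum>i\<in>UNIV. D$i$j0 * u i)" using s2 Mpos by (intro mult_left_mono) auto
  hence "m * M \<le> 1" using e2 by (simp add: mult.commute)
  ultimately have mM: "m * M = 1" by simp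
  hence S1: "(\<Sum>j\<in>UNIV. D$i0$j * v j) = M" using e1 mpos by (metis mult_left_cancel less_irrefl)
  have "(\<Sum>j\<in>UNIV. D$i0$j * (M - v j)) = (\<Sum>j\<in>UNIV. D$i0$j * M) - (\<Sum>j\<in>UNIV. D$i0$j * v j)"
    by (simp add: algebra_simps sum_subtractf)
  also have "\<dots> = 0" using S1 rows by (simp add: sum_distrib_right[symmetric])
  finally have z: "(\<Sum>j\<in>UNIV. D$i0$j * (M - v j)) = 0" .
  have "\<forall>j\<in>UNIV. D$i0$j * (M - v j) = 0"
    using z by (subst sum_nonneg_eq_0_iff[symmetric]) (use pos vM in \<open>auto intro!: mult_nonneg_nonneg simp: less_imp_le\<close>)
  hence vj: "v j = M" for j using pos by (metis UNIV_I mult_eq_0_iff less_irrefl eq_iff_diff_eq_0)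
  have "(\<Sum>j\<in>UNIV. u i * D$i$j * v j) = u i * M * (\<Sum>j\<in>UNIV. D$i$j)"
    by (simp add: vj sum_distrib_left algebra_simps)
  hence "u i * M = 1" using r2 rows by simp
  thus ?thesis using vj by simp
qed

lemma sink_unique:
  fixes A :: "real^'n^'n"
  assumes A: "positive_matrix A"
    and d1: "doubly_stochastic D1" "pos_diag X1" "pos_diag Y1" "D1 = X1 ** A ** Y1"
    and d2: "doubly_stochastic D2" "pos_diag X2" "pos_diag Y2" "D2 = X2 ** A ** Y2"
  shows "D2 = D1"
proof -
  define u where "u i = X2$i$i / X1$i$i" for i
  define v where "v j = Y2$j$j / Y1$j$j" for j
  have E1: "D1$i$j = X1$i$i * A$i$j * Y1$j$j" for i j using d1 diag_entry by metis
  have E2: "D2$i$j = X2$i$i * A$i$j * Y2$j$j" for i j using d2 diag_entry by metis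
  have x1: "X1$i$i > 0" "Y1$i$i > 0" "X2$i$i > 0" "Y2$i$i > 0" for i
    using d1 d2 by (auto simp: pos_diag_def)
  have E: "D2$i$j = u i * D1$i$j * v j" for i j
    using x1[of i] x1[of j] by (simp add: E1 E2 u_def v_def field_simps)
  have "u i * v j = 1" for i j
  proof (rule key[of D1])
    show "\<forall>i j. D1$i$j > 0" using A x1 by (simp add: E1 positive_matrix_def)
    show "\<forall>i. (\<Sum>j\<in>UNIV. D1$i$j) = 1" "\<forall>j. (\<Sum>i\<in>UNIV. D1$i$j) = 1"
      using d1 by (auto simp: doubly_stochastic_def)
    show "\<forall>i. u i > 0" "\<forall>j. v j > 0" using x1 by (auto simp: u_def v_def)
    show "\<forall>i. (\<Sum>j\<in>UNIV. u i * D1$i$j * v j) = 1" "\<forall>j. (\<Sum>i\<in>UNIV. u i * D1$i$j * v j) = 1"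
      using d2 by (auto simp: doubly_stochastic_def E[symmetric])
  qed
  hence "D2$i$j = D1$i$j" for i j by (simp add: E mult.commute mult.left_commute)
  thus ?thesis by (simp add: vec_eq_iff)
qed

lemma sinkhorn_eq:
  fixes A :: "real^'n^'n"
  assumes "positive_matrix A" "doubly_stochastic D" "pos_diag X" "pos_diag Y" "D = X ** A ** Y"
  shows "sinkhorn A = D"
  unfolding sinkhorn_def
proof (rule the_equality)
  show "doubly_stochastic D \<and> (\<exists>X Y. pos_diag X \<and> pos_diag Y \<and> D = X ** A ** Y)"
    using assms by blast
  fix D2 assume "doubly_stochastic D2 \<and> (\<exists>X Y. pos_diag X \<and> pos_diag Y \<and> D2 = X ** A ** Y)"
  then show "D2 = D" using sink_unique[OF assms(1-5)] by blast
qed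

lemma formula:
  fixes K :: real
  assumes K: "K > 0" "K \<noteq> 1"
  defines "a \<equiv> (- (K^2) - 2 + K * sqrt (K^2 + 8)) / (2 * (K^2 - 1))"
    and "b \<equiv> (3 * K^2 - K * sqrt (K^2 + 8)) / (4 * (K^2 - 1))"
    and "c \<equiv> (K^2 - 4 + K * sqrt (K^2 + 8)) / (8 * (K^2 - 1))"
  shows "sinkhorn (A4 K) = vector [vector [a, b, b], vector [b, c, c], vector [b, c, c]]"
proof -
  define s where "s = sqrt (K^2 + 8)"
  have s2: "s^2 = K^2 + 8" unfolding s_def by simp
  have spos: "s > 0" unfolding s_def by (metis add_nonneg_pos zero_le_power2 zero_less_numeral real_sqrt_gt_zero)
  have d: "K^2 - 1 \<noteq> 0" using K by (simp add: power2_eq_1_iff)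
  have Ks2: "(K * s)^2 = K^2*K^2 + 8*K^2" using s2 by (simp add: power_mult_distrib algebra_simps)
  have Kspos: "K * s > 0" using K spos by simp
  have K2pos: "K^2 > 0" using K by simp
  have q1: "(K^2+2)^2 = K^2*K^2 + 4*K^2 + 4" by (simp add: power2_eq_square algebra_simps)
  have q2: "(3*K^2)^2 = 9*(K^2*K^2)" by (simp add: power2_eq_square algebra_simps)
  have q3: "(4-K^2)^2 = K^2*K^2 - 8*K^2 + 16" by (simp add: power2_eq_square algebra_simps)
  have abc: "a > 0 \<and> b > 0 \<and> c > 0"
    proof (cases "K > 1")
      case True
      have dp: "K^2 > 1" using True by simp
      have qq: "K^2 * 1 < K^2 * K^2" using dp K2pos by (intro mult_strict_left_mono) auto
      have "(K^2+2)^2 < (K * s)^2" unfolding Ks2 q1 using dp by linarith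
      hence h1: "K^2 + 2 < K * s" by (rule power_less_imp_less_base) (use Kspos in auto)
      have "(K * s)^2 < (3*K^2)^2" unfolding Ks2 q2 using qq by linarith
      hence h2: "K * s < 3*K^2" by (rule power_less_imp_less_base) (use K in auto)
      have "(4 - K^2)^2 < (K * s)^2" unfolding Ks2 q3 using dp by linarith
      hence h3: "4 - K^2 < K * s" by (rule power_less_imp_less_base) (use Kspos in auto)
      show ?thesis unfolding a_def b_def c_def s_def[symmetric]
        using h1 h2 h3 dp by (auto intro!: divide_pos_pos)
    next
      case False
      hence Kl: "K < 1" using K by simp
      have dp: "K^2 < 1" using Kl K by (simp add: power2_less_1_iff)
      have qq: "K^2 * K^2 < K^2 * 1" using dp K2pos by (intro mult_strict_left_mono) auto
      have "(K * s)^2 < (K^2+2)^2" unfolding Ks2 q1 using dp by linarith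
      hence h1: "K * s < K^2 + 2" by (rule power_less_imp_less_base) (use K2pos in auto)
      have "(3*K^2)^2 < (K * s)^2" unfolding Ks2 q2 using qq by linarith
      hence h2: "3*K^2 < K * s" by (rule power_less_imp_less_base) (use Kspos in auto)
      have "(K * s)^2 < (4 - K^2)^2" unfolding Ks2 q3 using dp by linarith
      hence h3: "K * s < 4 - K^2" by (rule power_less_imp_less_base) (use dp in auto)
      show ?thesis unfolding a_def b_def c_def s_def[symmetric]
        using h1 h2 h3 dp by (auto intro!: divide_neg_neg)
    qed
  hence apos: "a > 0" and bpos: "b > 0" and cpos: "c > 0" by auto
  have idn: "(3*K^2 - K * s)^2 - K^2 * ((- (K^2) - 2 + K * s) * (K^2 - 4 + K * s)) = K^2*(1-K^2)*(s^2 - (K^2+8))"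
    by (simp add: power2_eq_square algebra_simps)
  have "b^2 = K^2 * (a * c)"
  proof -
    have "b^2 = (3*K^2 - K * s)^2 / (16 * (K^2-1)^2)" unfolding b_def s_def[symmetric]
      by (simp only: power_divide power_mult_distrib) simp
    also have "\<dots> = K^2 * ((- (K^2) - 2 + K * s) * (K^2 - 4 + K * s)) / (16 * (K^2-1)^2)"
      using idn s2 by simp
    also have "\<dots> = K^2 * (a*c)" unfolding a_def c_def s_def[symmetric] using d
      by (simp add: field_simps power2_eq_square)
    finally show ?thesis .
  qed
  hence ac: "a * c = (b/K)^2" using K by (simp add: power_divide field_simps)
  define x where "x = sqrt a"
  define y where "y = sqrt c"
  have xy: "K * x * y = b" unfolding x_def y_def
    using ac K bpos by (simp add: real_sqrt_mult[symmetric] mult.assoc)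
  have xx: "x * x = a" unfolding x_def using apos by simp
  have yy: "y * y = c" unfolding y_def using cpos by simp
  have xpos: "x > 0" "y > 0" unfolding x_def y_def using apos cpos by auto
  define X :: "real^3^3" where "X = (\<chi> i j. if i = j then (vector [x, y, y] :: real^3) $ i else 0)"
  have pX: "pos_diag X" unfolding pos_diag_def X_def
    using xpos by (auto simp: forall_3)
  have g1: "p/(2*e) + 2*(q/(4*e)) = (p+q)/(2*e)" if "e \<noteq> 0" for p q e :: real
    using that by (simp add: field_simps)
  have g2: "p/(4*e) + 2*(q/(8*e)) = (p+q)/(4*e)" if "e \<noteq> 0" for p q e :: real
    using that by (simp add: field_simps)
  have sab: "a + 2*b = 1" unfolding a_def b_def g1[OF d] using d by simp
  have sbc: "b + 2*c = 1" unfolding b_def c_def g2[OF d] using d by simp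
  let ?D = "vector [vector [a, b, b], vector [b, c, c], vector [b, c, c]] :: real^3^3"
  have pA: "positive_matrix (A4 K)" unfolding positive_matrix_def A4_def using K by (auto simp: forall_3)
  have ds: "doubly_stochastic ?D" unfolding doubly_stochastic_def
    using apos bpos cpos sab sbc by (auto simp: forall_3 sum_3 less_imp_le)
  have eq: "?D = X ** A4 K ** X"
  proof -
    have Xd: "X$i$i = (vector [x,y,y] :: real^3)$i" for i by (simp add: X_def)
    show ?thesis unfolding vec_eq_iff diag_entry[OF pX pX] Xd
      by (simp add: forall_3 A4_def xx[symmetric] yy[symmetric] xy[symmetric] mult_ac)
  qed
  show ?thesis using sinkhorn_eq[OF pA ds pX pX eq] .
qed

theorem mainTheorem9:
  shows "(\<forall>K::real. K > 0 \<and> K \<noteq> 1 \<longrightarrow>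
      (let a = (- (K^2) - 2 + K * sqrt (K^2 + 8)) / (2 * (K^2 - 1));
           b = (3 * K^2 - K * sqrt (K^2 + 8)) / (4 * (K^2 - 1));
           c = (K^2 - 4 + K * sqrt (K^2 + 8)) / (8 * (K^2 - 1))
       in sinkhorn (A4 K) = vector [vector [a, b, b], vector [b, c, c], vector [b, c, c]]))
    \<and> ((\<lambda>K. sinkhorn (A4 K)) \<longlongrightarrow>
         vector [vector [0, 1/2, 1/2], vector [1/2, 1/4, 1/4], vector [1/2, 1/4, 1/4]]) at_top"
proof
  show P: "\<forall>K::real. K > 0 \<and> K \<noteq> 1 \<longrightarrow>
      (let a = (- (K^2) - 2 + K * sqrt (K^2 + 8)) / (2 * (K^2 - 1));
           b = (3 * K^2 - K * sqrt (K^2 + 8)) / (4 * (K^2 - 1));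
           c = (K^2 - 4 + K * sqrt (K^2 + 8)) / (8 * (K^2 - 1))
       in sinkhorn (A4 K) = vector [vector [a, b, b], vector [b, c, c], vector [b, c, c]])"
    using formula by (simp add: Let_def)
  define a where "a K = (- (K^2) - 2 + K * sqrt (K^2 + 8)) / (2 * (K^2 - 1))" for K :: real
  define b where "b K = (3 * K^2 - K * sqrt (K^2 + 8)) / (4 * (K^2 - 1))" for K :: real
  define c where "c K = (K^2 - 4 + K * sqrt (K^2 + 8)) / (8 * (K^2 - 1))" for K :: real
  have la: "(a \<longlongrightarrow> 0) at_top" unfolding a_def by real_asymp
  have lb: "(b \<longlongrightarrow> 1/2) at_top" unfolding b_def by real_asymp
  have lc: "(c \<longlongrightarrow> 1/4) at_top" unfolding c_def by real_asymp
  have ev: "\<forall>\<^sub>F K in at_top. vector [vector [a K, b K, b K], vector [b K, c K, c K], vector [b K, c K, c K]] = sinkhorn (A4 K)"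
    using eventually_gt_at_top[of "1::real"]
    by eventually_elim (simp add: formula a_def b_def c_def)
  have lim: "((\<lambda>K. vector [vector [a K, b K, b K], vector [b K, c K, c K], vector [b K, c K, c K]] :: real^3^3) \<longlongrightarrow>
         vector [vector [0, 1/2, 1/2], vector [1/2, 1/4, 1/4], vector [1/2, 1/4, 1/4]]) at_top"
  proof (intro vec_tendstoI)
    fix i j :: 3
    show "((\<lambda>K. (vector [vector [a K, b K, b K], vector [b K, c K, c K], vector [b K, c K, c K]] :: real^3^3) $ i $ j) \<longlongrightarrow>
         (vector [vector [0, 1/2, 1/2], vector [1/2, 1/4, 1/4], vector [1/2, 1/4, 1/4]] :: real^3^3) $ i $ j) at_top"
      using exhaust_3[of i] exhaust_3[of j] la lb lc by (elim disjE) simp_all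
  qed
  show "((\<lambda>K. sinkhorn (A4 K)) \<longlongrightarrow>
         vector [vector [0, 1/2, 1/2], vector [1/2, 1/4, 1/4], vector [1/2, 1/4, 1/4]]) at_top"
    using Lim_transform_eventually[OF lim ev] .
qed

end
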